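(* Let $(\mathcal{X},\mu)$ be a probability space without atoms. Let $\Psi:(0,1]\to\mathbb{R}_+$ satisfy the following: - $\Psi(1)>0$ and $\Psi$ is decreasing; - $\psi(s):=s\Psi(s)$ is increasing and $\psi(0_+)=0$; - $\int_0\frac{ds}{s\Psi(s)}<\infty$; - $t\mapsto\Psi(e^{-t})$ is convex near $\infty$. Then there exists a function $\alpha$ on $[1,\infty)$ such that $t\mapsto t\alpha(t)>0$ is increasing on $[1,\infty)$, $$\int_1^\infty\frac{dt}{t\alpha(t)}<\infty,$$ and $$\alpha\Big(\frac{\|f\|_*}{\|f\|_1}\Big)\|f\|_*\le\|f\|_{\Lambda_\psi}$$ for all measurable $f$ for which the left-hand side is defined.
   Context: Norms: for a measurable $f$ let $N_f(t)=\mu\{x:|f(x)|>t\}$ and $\|f\|_1=\int|f|\,d\mu$. The Lorentz norm is $$\|f\|_{\Lambda_\psi}=\int_0^\infty\psi(N_f(t))\,dt,$$ equivalently $\int_0^1f^*(s)\,d\psi(s)$, where $f^*$ is the decreasing rearrangement of $|f|$. The norm $\|f\|_*$ is $\|f\|_{\Lambda_{\psi_0}}$ with $\psi_0(s)=s\ln(e/s)$. Note that $\|f\|_*\ge\|f\|_1$. *)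

theory Defs
  imports "HOL-Probability.Probability"
begin

definition atomless :: "'a measure \<Rightarrow> bool" where
  "atomless M \<longleftrightarrow> (\<forall>A\<in>sets M. 0 < emeasure M A \<longrightarrow>
      (\<exists>B\<in>sets M. B \<subseteq> A \<and> 0 < emeasure M B \<and> emeasure M B < emeasure M A))"

definition distr_fun :: "'a measure \<Rightarrow> ('a \<Rightarrow> real) \<Rightarrow> real \<Rightarrow> real" where
  "distr_fun M f t = measure M {x \<in> space M. \<bar>f x\<bar> > t}"

definition lorentz_norm :: "'a measure \<Rightarrow> (real \<Rightarrow> real) \<Rightarrow> ('a \<Rightarrow> real) \<Rightarrow> ennreal" where
  "lorentz_norm M \<psi> f = (\<integral>\<^sup>+ t. indicator {0..} t * ennreal (\<psi> (distr_fun M f t)) \<partial>lborel)"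

definition L1_norm :: "'a measure \<Rightarrow> ('a \<Rightarrow> real) \<Rightarrow> ennreal" where
  "L1_norm M f = (\<integral>\<^sup>+ x. ennreal \<bar>f x\<bar> \<partial>M)"

definition psi0 :: "real \<Rightarrow> real" where
  "psi0 s = (if s = 0 then 0 else s * ln (exp 1 / s))"

definition star_norm :: "'a measure \<Rightarrow> ('a \<Rightarrow> real) \<Rightarrow> ennreal" where
  "star_norm M f = lorentz_norm M psi0 f"

end

theory Submission
  imports Defs
begin

lemma layer_cake:
  assumes P: "prob_space M" and f[measurable]: "f \<in> borel_measurable M"
  shows "L1_norm M f = (\<integral>\<^sup>+t. indicator {0..} t * ennreal (distr_fun M f t) \<partial>lborel)"
proof -
  interpret prob_space M by (rule P)
  interpret pair_sigma_finite M lborel by unfold_locales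
  let ?g = "\<lambda>(x,t). indicator {0..} t * (if t < \<bar>f x\<bar> then 1 else 0) :: ennreal"
  have gm: "?g \<in> borel_measurable (M \<Otimes>\<^sub>M lborel)" by measurable
  have inner1: "(\<integral>\<^sup>+t. ?g (x,t) \<partial>lborel) = ennreal \<bar>f x\<bar>" for x
  proof -
    have "(\<integral>\<^sup>+t. ?g (x,t) \<partial>lborel) = (\<integral>\<^sup>+t. indicator {0..<\<bar>f x\<bar>} t \<partial>lborel)"
      by (intro nn_integral_cong) (auto split: split_indicator)
    also have "\<dots> = ennreal \<bar>f x\<bar>" by simp
    finally show ?thesis .
  qed
  have inner2: "(\<integral>\<^sup>+x. ?g (x,t) \<partial>M) = indicator {0..} t * ennreal (distr_fun M f t)" for t
  proof -
    have "(\<integral>\<^sup>+x. ?g (x,t) \<partial>M) = (\<integral>\<^sup>+x. indicator {0..} t * indicator {x\<in>space M. t < \<bar>f x\<bar>} x \<partial>M)"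
      by (intro nn_integral_cong) (auto split: split_indicator)
    also have "\<dots> = indicator {0..} t * emeasure M {x\<in>space M. t < \<bar>f x\<bar>}"
      by (subst nn_integral_cmult) auto
    also have "\<dots> = indicator {0..} t * ennreal (distr_fun M f t)"
      by (simp add: distr_fun_def emeasure_eq_measure)
    finally show ?thesis .
  qed
  have "L1_norm M f = (\<integral>\<^sup>+x. (\<integral>\<^sup>+t. ?g (x,t) \<partial>lborel) \<partial>M)"
    unfolding L1_norm_def inner1 ..
  also have "\<dots> = (\<integral>\<^sup>+t. (\<integral>\<^sup>+x. ?g (x,t) \<partial>M) \<partial>lborel)"
    using Fubini'[OF gm] by simp
  also have "\<dots> = (\<integral>\<^sup>+t. indicator {0..} t * ennreal (distr_fun M f t) \<partial>lborel)"
    unfolding inner2 ..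
  finally show ?thesis .
qed


lemma convex_max_comp:
  fixes F :: "real \<Rightarrow> real"
  assumes cv: "convex_on {T1..} F" and mo: "mono_on {T1..} F"
  shows "convex_on UNIV (\<lambda>u. F (max (u - 1) T1))"
proof (rule convex_onI)
  fix t x y :: real assume t: "0 < t" "t < 1"
  let ?a = "max (x - 1) T1" and ?b = "max (y - 1) T1"
  have le: "max (((1 - t) *\<^sub>R x + t *\<^sub>R y) - 1) T1 \<le> (1 - t) * ?a + t * ?b"
  proof -
    have "((1 - t) *\<^sub>R x + t *\<^sub>R y) - 1 = (1-t)*(x-1) + t*(y-1)" by (simp add: algebra_simps)
    also have "\<dots> \<le> (1 - t) * ?a + t * ?b"
      using t by (intro add_mono mult_left_mono) auto
    finally have 1: "((1 - t) *\<^sub>R x + t *\<^sub>R y) - 1 \<le> (1 - t) * ?a + t * ?b" .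
    have "T1 = (1-t)*T1 + t*T1" by (simp add: algebra_simps)
    also have "\<dots> \<le> (1 - t) * ?a + t * ?b"
      using t by (intro add_mono mult_left_mono) auto
    finally show ?thesis using 1 by simp
  qed
  have ge: "T1 \<le> (1 - t) * ?a + t * ?b"
  proof -
    have "T1 = (1-t)*T1 + t*T1" by (simp add: algebra_simps)
    also have "\<dots> \<le> (1 - t) * ?a + t * ?b"
      using t by (intro add_mono mult_left_mono) auto
    finally show ?thesis .
  qed
  have "F (max (((1 - t) *\<^sub>R x + t *\<^sub>R y) - 1) T1) \<le> F ((1 - t) * ?a + t * ?b)"
    using mo le ge by (intro mono_onD[OF mo]) auto
  also have "\<dots> \<le> (1 - t) * F ?a + t * F ?b"
    using convex_onD[OF cv, of t ?a ?b] t by auto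
  finally show "F (max (((1 - t) *\<^sub>R x + t *\<^sub>R y) - 1) T1) \<le> (1 - t) * F ?a + t * F ?b" .
qed simp

lemma support_line:
  fixes b :: "real \<Rightarrow> real"
  assumes cv: "convex_on UNIV b" and mo: "mono b"
  shows "\<exists>k\<ge>0. \<forall>u. b u \<ge> b r + k * (u - r)"
proof -
  let ?S = "(\<lambda>t. (b r - b t) / (r - t)) ` ({r<..} \<inter> UNIV)"
  have "\<forall>u. b u \<ge> b r + Inf ?S * (u - r)"
    using convex_le_Inf_differential[OF cv] by auto
  moreover have "Inf ?S \<ge> 0"
  proof (rule cInf_greatest)
    show "?S \<noteq> {}" by auto
    fix z assume "z \<in> ?S"
    then obtain t where "t > r" "z = (b r - b t) / (r - t)" by auto
    moreover have "b r \<le> b t" using mo \<open>t > r\<close> by (simp add: monoD)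
    ultimately show "0 \<le> z" by (simp add: divide_nonpos_neg)
  qed
  ultimately show ?thesis by blast
qed


lemma sub_bound:
  fixes \<Psi> :: "real \<Rightarrow> real"
  assumes hint: "set_integrable lborel {0<..\<delta>} (\<lambda>s. 1 / (s * \<Psi> s))"
    and Tle: "exp (- T1) \<le> \<delta>"
    and meas: "(\<lambda>v. indicator {..-T1} v * ennreal (1 / \<Psi> (exp v))) \<in> borel_measurable borel"
  shows "(\<integral>\<^sup>+v. indicator {..-T1} v * ennreal (1 / \<Psi> (exp v)) \<partial>lborel)
          \<le> (\<integral>\<^sup>+s. indicator {0<..\<delta>} s * ennreal (1 / (s * \<Psi> s)) \<partial>lborel)"
proof -
  let ?f = "\<lambda>s. 1 / (s * \<Psi> s)"
  let ?H = "(\<integral>\<^sup>+s. indicator {0<..\<delta>} s * ennreal (1 / (s * \<Psi> s)) \<partial>lborel)"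
  let ?h = "\<lambda>v. indicator {..-T1} v * ennreal (1 / \<Psi> (exp v))"
  define F where "F = (\<lambda>n::nat. \<lambda>v. indicator {-T1 - real n..-T1} v * ?h v)"
  have fm: "(\<lambda>x. indicator {0<..\<delta>} x *\<^sub>R ?f x) \<in> borel_measurable borel"
    using hint unfolding set_integrable_def by (auto dest: borel_measurable_integrable)
  have Fm: "F n \<in> borel_measurable borel" for n
    unfolding F_def using meas by measurable
  have inc: "incseq F"
    unfolding F_def
    by (intro monoI le_funI mult_right_mono) (auto split: split_indicator)
  have sup: "(SUP n. F n v) = ?h v" for v
  proof (rule antisym)
    show "(SUP n. F n v) \<le> ?h v"
      unfolding F_def by (intro SUP_least) (auto split: split_indicator)
    show "?h v \<le> (SUP n. F n v)"
    proof (cases "v \<le> -T1")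
      case True
      obtain n :: nat where "real n \<ge> -T1 - v" using real_arch_simple by blast
      then have "F n v = ?h v" unfolding F_def using True by (auto split: split_indicator)
      then show ?thesis by (metis SUP_upper UNIV_I)
    qed (auto split: split_indicator)
  qed
  have each: "integral\<^sup>N lborel (F n) \<le> ?H" for n
  proof -
    let ?a = "-T1 - real n" and ?b = "-T1"
    have pos: "\<And>x. exp ?a \<le> x \<Longrightarrow> 0 < x" using exp_gt_zero less_le_trans by blast
    have sm: "set_borel_measurable borel {exp ?a..exp ?b} ?f"
    proof -
      have "(\<lambda>x. indicator {exp ?a..exp ?b} x *\<^sub>R ?f x) =
            (\<lambda>x. indicator {exp ?a..exp ?b} x *\<^sub>R (indicator {0<..\<delta>} x *\<^sub>R ?f x))"
        using Tle pos by (auto simp: fun_eq_iff split: split_indicator)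
      then show ?thesis unfolding set_borel_measurable_def
        by (simp only:) (rule borel_measurable_scaleR[OF _ fm], simp)
    qed
    have sub: "(\<integral>\<^sup>+x. ?f x * indicator {exp ?a..exp ?b} x \<partial>lborel) =
          (\<integral>\<^sup>+x. ?f (exp x) * exp x * indicator {?a..?b} x \<partial>lborel)"
      by (rule nn_integral_substitution[where g=exp and g'=exp and a="?a" and b="?b", OF sm]) (auto intro!: derivative_eq_intros continuous_intros)
    have "integral\<^sup>N lborel (F n) = (\<integral>\<^sup>+x. ?f (exp x) * exp x * indicator {?a..?b} x \<partial>lborel)"
      unfolding F_def by (intro nn_integral_cong) (auto split: split_indicator simp: field_simps)
    also have "\<dots> = (\<integral>\<^sup>+x. ?f x * indicator {exp ?a..exp ?b} x \<partial>lborel)" using sub by simp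
    also have "\<dots> \<le> ?H"
      using Tle pos by (intro nn_integral_mono) (auto split: split_indicator)
    finally show ?thesis .
  qed
  have "(\<integral>\<^sup>+v. ?h v \<partial>lborel) = (\<integral>\<^sup>+v. (SUP n. F n v) \<partial>lborel)" by (simp add: sup)
  also have "\<dots> = (SUP n. integral\<^sup>N lborel (F n))"
    by (rule nn_integral_monotone_convergence_SUP[OF inc]) (simp add: Fm)
  also have "\<dots> \<le> ?H" by (intro SUP_least each)
  finally show ?thesis .
qed


lemma integ:
  fixes \<Psi> \<beta> :: "real \<Rightarrow> real"
  assumes hint: "set_integrable lborel {0<..\<delta>} (\<lambda>s. 1 / (s * \<Psi> s))"
    and Tle: "exp (- T1) \<le> \<delta>" and T1: "T1 \<ge> 0" and c: "c > 0"
    and bdef: "\<And>u. \<beta> u = c * \<Psi> (exp (- max (u - 1) T1))"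
    and bmono: "mono \<beta>" and b0: "\<And>u. \<beta> u \<ge> b0" "b0 > 0"
  shows "set_integrable lborel {1..} (\<lambda>t. 1 / \<beta> t)"
proof -
  have bm[measurable]: "\<beta> \<in> borel_measurable borel" by (rule borel_measurable_mono[OF bmono])
  have bpos: "\<beta> u > 0" for u using b0(1)[of u] b0(2) by linarith
  let ?H = "(\<integral>\<^sup>+s. indicator {0<..\<delta>} s * ennreal (1 / (s * \<Psi> s)) \<partial>lborel)"
  have Hfin: "?H < \<infinity>"
  proof -
    have aux: "\<And>y::real. 1/y \<le> 1/\<bar>y\<bar>" by (simp add: abs_if)
    have "?H \<le> (\<integral>\<^sup>+s. ennreal (norm (indicator {0<..\<delta>} s *\<^sub>R (1 / (s * \<Psi> s)))) \<partial>lborel)"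
      using aux by (intro nn_integral_mono) (auto split: split_indicator)
    also have "\<dots> < \<infinity>" using hint unfolding set_integrable_def integrable_iff_bounded by simp
    finally show ?thesis .
  qed
  define h2 where "h2 = (\<lambda>x. indicator {1+T1..} x * ennreal (c / \<beta> x))"
  have h2m[measurable]: "h2 \<in> borel_measurable borel" unfolding h2_def by measurable
  have refl: "(\<lambda>v. h2 (1 + (-1) * v)) = (\<lambda>v. indicator {..-T1} v * ennreal (1 / \<Psi> (exp v)))"
  proof
    fix v
    show "h2 (1 + (-1) * v) = indicator {..-T1} v * ennreal (1 / \<Psi> (exp v))"
    proof (cases "v \<le> -T1")
      case True
      then have "\<beta> (1 + (-1) * v) = c * \<Psi> (exp v)" using bdef[of "1 - v"] by simp
      then show ?thesis unfolding h2_def using True c by (simp add: indicator_def)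
    qed (auto simp: h2_def indicator_def)
  qed
  have "(\<integral>\<^sup>+x. h2 x \<partial>lborel) = (\<integral>\<^sup>+v. indicator {..-T1} v * ennreal (1 / \<Psi> (exp v)) \<partial>lborel)"
    using nn_integral_real_affine[OF h2m, of "-1" 1] by (simp add: refl[simplified])
  also have "\<dots> \<le> ?H"
    by (rule sub_bound[OF hint Tle]) (use h2m in \<open>simp flip: refl\<close>)
  finally have h2fin: "(\<integral>\<^sup>+x. h2 x \<partial>lborel) < \<infinity>" using Hfin by simp
  have "(\<integral>\<^sup>+x. ennreal (indicator {1..} x *\<^sub>R (1 / \<beta> x)) \<partial>lborel)
      \<le> (\<integral>\<^sup>+x. indicator {1..1+T1} x * ennreal (1/b0) + ennreal (1/c) * h2 x \<partial>lborel)"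
  proof (intro nn_integral_mono)
    fix x
    show "ennreal (indicator {1..} x *\<^sub>R (1 / \<beta> x))
       \<le> indicator {1..1+T1} x * ennreal (1/b0) + ennreal (1/c) * h2 x"
    proof (cases "x \<le> 1 + T1")
      case True
      have "1 / \<beta> x \<le> 1 / b0" using b0 bpos[of x] by (simp add: frac_le)
      then have e: "ennreal (1/\<beta> x) \<le> ennreal (1/b0)" by (rule ennreal_leI)
      have "ennreal (1/b0) \<le> ennreal (1/b0) + ennreal (1/c) * h2 x" by simp
      with e have "ennreal (1/\<beta> x) \<le> ennreal (1/b0) + ennreal (1/c) * h2 x" by (rule order_trans)
      then show ?thesis using True by (auto simp: indicator_def)
    next
      case False
      have "ennreal (1/c) * h2 x = ennreal (1 / \<beta> x)"
        unfolding h2_def using False c bpos[of x]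
        by (simp add: indicator_def ennreal_mult''[symmetric])
      then show ?thesis using False by (auto simp: indicator_def)
    qed
  qed
  also have "\<dots> = (\<integral>\<^sup>+x. indicator {1..1+T1} x * ennreal (1/b0) \<partial>lborel) + ennreal (1/c) * (\<integral>\<^sup>+x. h2 x \<partial>lborel)"
    by (subst nn_integral_add) (auto simp: nn_integral_cmult)
  also have "\<dots> < \<infinity>"
    using h2fin T1 by (simp add: nn_integral_multc ennreal_mult_less_top)
  finally show ?thesis
    unfolding set_integrable_def
    by (intro integrableI_nonneg) (auto simp: less_imp_le bpos)
qed


theorem lemma3p6:
  fixes M :: "'a measure" and \<Psi> :: "real \<Rightarrow> real"
  assumes "prob_space M" and "atomless M"
    and "\<forall>s\<in>{0<..1}. \<Psi> s \<ge> 0"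
    and "\<Psi> 1 > 0"
    and "antimono_on {0<..1} \<Psi>"
    and "mono_on {0<..1} (\<lambda>s. s * \<Psi> s)"
    and "((\<lambda>s. s * \<Psi> s) \<longlongrightarrow> 0) (at_right 0)"
    and "\<exists>\<delta>\<in>{0<..1}. set_integrable lborel {0<..\<delta>} (\<lambda>s. 1 / (s * \<Psi> s))"
    and "\<exists>T\<ge>0. convex_on {T..} (\<lambda>t. \<Psi> (exp (- t)))"
  shows "\<exists>\<alpha> :: real \<Rightarrow> real.
           (\<forall>t\<ge>1. t * \<alpha> t > 0)
         \<and> mono_on {1..} (\<lambda>t. t * \<alpha> t)
         \<and> set_integrable lborel {1..} (\<lambda>t. 1 / (t * \<alpha> t))
         \<and> (\<forall>f \<in> borel_measurable M.
               0 < L1_norm M f \<longrightarrow> star_norm M f < \<infinity> \<longrightarrow>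
               ennreal (\<alpha> (enn2real (star_norm M f) / enn2real (L1_norm M f))
                        * enn2real (star_norm M f))
               \<le> lorentz_norm M (\<lambda>s. s * \<Psi> s) f)"
proof -
  note P = assms(1)
  have Psi_nn: "\<And>s. 0 < s \<Longrightarrow> s \<le> 1 \<Longrightarrow> \<Psi> s \<ge> 0" using assms(3) by auto
  have Psi1: "\<Psi> 1 > 0" by fact
  have anti: "\<And>x y. 0 < x \<Longrightarrow> x \<le> y \<Longrightarrow> y \<le> 1 \<Longrightarrow> \<Psi> y \<le> \<Psi> x"
    using assms(5) unfolding monotone_on_def by auto
  have Psi_ge1: "\<And>s. 0 < s \<Longrightarrow> s \<le> 1 \<Longrightarrow> \<Psi> s \<ge> \<Psi> 1" using anti by auto
  obtain \<delta> where \<delta>: "0 < \<delta>" "\<delta> \<le> 1" and hint: "set_integrable lborel {0<..\<delta>} (\<lambda>s. 1 / (s * \<Psi> s))"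
    using assms(8) by auto
  obtain T where T: "T \<ge> 0" and cvT: "convex_on {T..} (\<lambda>t. \<Psi> (exp (- t)))"
    using assms(9) by auto
  define T1 where "T1 = max T (- ln \<delta>)"
  have T1: "T1 \<ge> 0" "T \<le> T1" unfolding T1_def using T by auto
  have Tle: "exp (- T1) \<le> \<delta>"
  proof -
    have "- T1 \<le> ln \<delta>" unfolding T1_def by auto
    then have "exp (- T1) \<le> exp (ln \<delta>)" by simp
    then show ?thesis using \<delta> by simp
  qed
  define F where "F = (\<lambda>t. \<Psi> (exp (- t)))"
  have Fmono: "F x \<le> F y" if "0 \<le> x" "x \<le> y" for x y
    unfolding F_def using that by (intro anti) auto
  have Fge: "F x \<ge> \<Psi> 1" if "0 \<le> x" for x
    unfolding F_def using that by (intro Psi_ge1) auto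
  define c where "c = \<Psi> 1 / F T1"
  have FT1: "F T1 \<ge> \<Psi> 1" using Fge T1 by auto
  have c: "0 < c" "c \<le> 1" unfolding c_def using FT1 Psi1 by (auto simp: field_simps)
  define \<beta> where "\<beta> = (\<lambda>u. c * F (max (u - 1) T1))"
  have bdef: "\<And>u. \<beta> u = c * \<Psi> (exp (- max (u - 1) T1))" unfolding \<beta>_def F_def by simp
  have bmono: "mono \<beta>"
  proof (rule monoI)
    fix x y :: real assume "x \<le> y"
    then have "F (max (x - 1) T1) \<le> F (max (y - 1) T1)" using T1 by (intro Fmono) auto
    then show "\<beta> x \<le> \<beta> y" unfolding \<beta>_def using c by (simp add: mult_left_mono)
  qed
  have bge: "\<beta> u \<ge> \<Psi> 1" for u
  proof -
    have "F T1 \<le> F (max (u - 1) T1)" using T1 by (intro Fmono) auto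
    then have "c * F T1 \<le> \<beta> u" unfolding \<beta>_def using c by (simp add: mult_left_mono)
    moreover have "c * F T1 = \<Psi> 1" unfolding c_def using FT1 Psi1 by simp
    ultimately show ?thesis by simp
  qed
  have bconv: "convex_on UNIV \<beta>"
  proof -
    have "convex_on {T1..} F" unfolding F_def
      by (rule convex_on_subset[OF cvT]) (use T1 in auto)
    moreover have "mono_on {T1..} F" using T1 by (intro mono_onI Fmono) auto
    ultimately have "convex_on UNIV (\<lambda>u. F (max (u - 1) T1))" by (rule convex_max_comp)
    then show ?thesis unfolding \<beta>_def using c by (intro convex_on_cmul) auto
  qed
  have key: "s * \<Psi> s + k * r * s \<ge> \<beta> r * s + k * psi0 s"
    if s: "0 \<le> s" "s \<le> 1" and k: "k \<ge> 0" and sup: "\<forall>u. \<beta> u \<ge> \<beta> r + k * (u - r)" for s k r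
  proof (cases "s = 0")
    case True then show ?thesis by (simp add: psi0_def)
  next
    case False
    with s have s0: "0 < s" by simp
    define u where "u = 1 - ln s"
    have p0: "psi0 s = s * u" unfolding psi0_def u_def using s0 by (simp add: ln_div)
    have "\<beta> u \<le> \<Psi> s"
    proof (cases "- ln s \<ge> T1")
      case True
      then have "\<beta> u = c * \<Psi> s" unfolding bdef u_def using s0 by simp
      moreover have "c * \<Psi> s \<le> 1 * \<Psi> s" using c Psi_nn[OF s0 s(2)] by (intro mult_right_mono) auto
      ultimately show ?thesis by simp
    next
      case False
      then have "\<beta> u = c * F T1" unfolding \<beta>_def u_def by simp
      also have "\<dots> = \<Psi> 1" unfolding c_def using FT1 Psi1 by simp
      also have "\<dots> \<le> \<Psi> s" using Psi_ge1 s0 s by simp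
      finally show ?thesis .
    qed
    then have "s * \<beta> u \<le> s * \<Psi> s" using s0 by (simp add: mult_left_mono)
    moreover have "s * (\<beta> r + k * (u - r)) \<le> s * \<beta> u" using sup s0 by (simp add: mult_left_mono)
    moreover have "s * (\<beta> r + k * (u - r)) = \<beta> r * s + k * psi0 s - k * r * s"
      unfolding p0 by (simp add: algebra_simps)
    ultimately show ?thesis by linarith
  qed
  define \<alpha> where "\<alpha> = (\<lambda>t. \<beta> t / t)"
  have ta: "t * \<alpha> t = \<beta> t" if "t \<ge> 1" for t unfolding \<alpha>_def using that by simp
  have "\<forall>t\<ge>1. t * \<alpha> t > 0" using ta bge Psi1 by (metis less_le_trans)
  moreover have "mono_on {1..} (\<lambda>t. t * \<alpha> t)"
    by (intro mono_onI) (simp add: ta monoD[OF bmono])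
  moreover have "set_integrable lborel {1..} (\<lambda>t. 1 / (t * \<alpha> t))"
  proof -
    have "set_integrable lborel {1..} (\<lambda>t. 1 / \<beta> t)"
      by (rule integ[OF hint Tle T1(1) c(1) bdef bmono bge Psi1])
    then show ?thesis by (rule set_integrable_cong[THEN iffD1, rotated 3]) (auto simp: ta)
  qed
  moreover have "\<forall>f \<in> borel_measurable M.
               0 < L1_norm M f \<longrightarrow> star_norm M f < \<infinity> \<longrightarrow>
               ennreal (\<alpha> (enn2real (star_norm M f) / enn2real (L1_norm M f))
                        * enn2real (star_norm M f))
               \<le> lorentz_norm M (\<lambda>s. s * \<Psi> s) f"
  proof (intro ballI impI)
    fix f assume fm[measurable]: "f \<in> borel_measurable M" and L1pos: "0 < L1_norm M f"
      and sfin: "star_norm M f < \<infinity>"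
    interpret prob_space M by (rule P)
    define N where "N = distr_fun M f"
    have N01: "0 \<le> N t" "N t \<le> 1" for t unfolding N_def distr_fun_def by auto
    have Nanti: "N y \<le> N x" if "x \<le> y" for x y
      unfolding N_def distr_fun_def using that by (intro finite_measure_mono) auto
    have "(\<lambda>t. - N t) \<in> borel_measurable borel"
      by (rule borel_measurable_mono) (auto intro!: monoI simp: Nanti)
    then have Nm[measurable]: "N \<in> borel_measurable borel"
      using borel_measurable_uminus[of "\<lambda>t. - N t" borel] by simp
    have psimono: "a * \<Psi> a \<le> b * \<Psi> b" if "0 \<le> a" "a \<le> b" "b \<le> 1" for a b
    proof (cases "a = 0")
      case True
      then show ?thesis using that Psi_nn[of b] by (cases "b = 0") auto
    next
      case False
      then show ?thesis using that assms(6) unfolding monotone_on_def by auto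
    qed
    have "(\<lambda>t. - (N t * \<Psi> (N t))) \<in> borel_measurable borel"
      by (rule borel_measurable_mono) (auto intro!: monoI psimono simp: Nanti N01)
    then have PNm[measurable]: "(\<lambda>t. N t * \<Psi> (N t)) \<in> borel_measurable borel"
      using borel_measurable_uminus[of "\<lambda>t. - (N t * \<Psi> (N t))" borel] by simp
    have P0m[measurable]: "(\<lambda>t. psi0 (N t)) \<in> borel_measurable borel"
      unfolding psi0_def by measurable
    have psi0_nn: "psi0 s \<ge> 0" if "0 \<le> s" "s \<le> 1" for s
    proof (cases "s = 0")
      case False
      then have "ln (exp 1 / s) = 1 - ln s" using that by (simp add: ln_div)
      moreover have "ln s \<le> 0" using that False by simp
      ultimately show ?thesis unfolding psi0_def using that by simp
    qed (simp add: psi0_def)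
    define I where "I = (\<lambda>\<phi>::real \<Rightarrow> real. \<integral>\<^sup>+t. indicator {0..} t * ennreal (\<phi> t) \<partial>lborel)"
    have add: "I (\<lambda>t. a t + q * b t) = I a + ennreal q * I b"
      if am: "a \<in> borel_measurable borel" and bm: "b \<in> borel_measurable borel"
        and nn: "\<And>t. a t \<ge> 0" "\<And>t. b t \<ge> 0" and q: "q \<ge> 0" for a b q
    proof -
      have "I (\<lambda>t. a t + q * b t) = (\<integral>\<^sup>+t. indicator {0..} t * ennreal (a t) + ennreal q * (indicator {0..} t * ennreal (b t)) \<partial>lborel)"
        unfolding I_def using nn q
        by (intro nn_integral_cong) (simp add: ennreal_plus ennreal_mult distrib_left mult_ac)
      also have "\<dots> = I a + ennreal q * I b"
        unfolding I_def using am bm by (subst nn_integral_add) (auto simp: nn_integral_cmult)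
      finally show ?thesis .
    qed
    have cm: "I (\<lambda>t. q * b t) = ennreal q * I b"
      if bm: "b \<in> borel_measurable borel" and q: "q \<ge> 0" for b q
    proof -
      have "I (\<lambda>t. q * b t) = (\<integral>\<^sup>+t. ennreal q * (indicator {0..} t * ennreal (b t)) \<partial>lborel)"
        unfolding I_def using q
        by (intro nn_integral_cong) (simp add: ennreal_mult' mult_ac)
      also have "\<dots> = ennreal q * I b"
        unfolding I_def using bm by (auto simp: nn_integral_cmult)
      finally show ?thesis .
    qed
    have lor: "lorentz_norm M (\<lambda>s. s * \<Psi> s) f = I (\<lambda>t. N t * \<Psi> (N t))"
      by (simp add: lorentz_norm_def I_def N_def)
    have st: "star_norm M f = I (\<lambda>t. psi0 (N t))"
      by (simp add: star_norm_def lorentz_norm_def I_def N_def)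
    have l1: "L1_norm M f = I N"
      unfolding I_def N_def by (rule layer_cake[OF P fm])
    show "ennreal (\<alpha> (enn2real (star_norm M f) / enn2real (L1_norm M f)) * enn2real (star_norm M f))
               \<le> lorentz_norm M (\<lambda>s. s * \<Psi> s) f"
    proof (cases "L1_norm M f = \<infinity>")
      case True
      then show ?thesis by (simp add: \<alpha>_def)
    next
      case False
      define L where "L = enn2real (L1_norm M f)"
      define S where "S = enn2real (star_norm M f)"
      have L1e: "L1_norm M f = ennreal L" unfolding L_def using False by (cases "L1_norm M f") auto
      have Se: "star_norm M f = ennreal S" unfolding S_def using sfin by (cases "star_norm M f") auto
      have L0: "L > 0" using L1pos unfolding L1e by simp
      have S0: "S \<ge> 0" unfolding S_def by simp
      define r where "r = S / L"
      have r0: "r \<ge> 0" unfolding r_def using L0 S0 by simp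
      have rL: "r * L = S" unfolding r_def using L0 by simp
      obtain k where k: "k \<ge> 0" and sup: "\<forall>u. \<beta> u \<ge> \<beta> r + k * (u - r)"
        using support_line[OF bconv bmono] by blast
      have br0: "\<beta> r \<ge> 0" using bge[of r] Psi1 by simp
      have "I (\<lambda>t. \<beta> r * N t + k * psi0 (N t)) \<le> I (\<lambda>t. N t * \<Psi> (N t) + (k * r) * N t)"
        unfolding I_def
      proof (intro nn_integral_mono mult_left_mono ennreal_leI)
        fix t
        show "\<beta> r * N t + k * psi0 (N t) \<le> N t * \<Psi> (N t) + (k * r) * N t"
          using key[OF N01(1)[of t] N01(2)[of t] k sup] by (simp add: mult_ac)
      qed simp
      also have "\<dots> = I (\<lambda>t. N t * \<Psi> (N t)) + ennreal (k * r) * I N"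
        using N01 psimono[of 0 "N _"] k r0 by (intro add) auto
      finally have ineq: "ennreal (\<beta> r) * I N + ennreal k * I (\<lambda>t. psi0 (N t))
          \<le> I (\<lambda>t. N t * \<Psi> (N t)) + ennreal (k * r) * I N"
        using add[of "\<lambda>t. \<beta> r * N t" "\<lambda>t. psi0 (N t)" k] br0 N01 psi0_nn k cm[OF Nm br0] by simp
      have e1: "ennreal (\<beta> r) * I N = ennreal (\<beta> r * L)" unfolding l1[symmetric] L1e using br0 L0 by (simp add: ennreal_mult)
      have e2: "ennreal k * I (\<lambda>t. psi0 (N t)) = ennreal (k * S)" unfolding st[symmetric] Se using k S0 by (simp add: ennreal_mult)
      have e3: "ennreal (k * r) * I N = ennreal (k * S)"
        unfolding l1[symmetric] L1e using k r0 rL L0 by (simp add: ennreal_mult[symmetric] mult.assoc)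
      have "ennreal (k * S) + ennreal (\<beta> r * L) \<le> ennreal (k * S) + lorentz_norm M (\<lambda>s. s * \<Psi> s) f"
        using ineq unfolding e1 e2 e3 lor by (simp add: add.commute)
      then have fin: "ennreal (\<beta> r * L) \<le> lorentz_norm M (\<lambda>s. s * \<Psi> s) f"
        by (simp add: ennreal_add_left_cancel_le)
      show ?thesis
      proof (cases "S = 0")
        case True then show ?thesis by (simp add: S_def[symmetric])
      next
        case False
        then have "r > 0" using r0 L0 S0 unfolding r_def by auto
        then have "\<alpha> r * S = \<beta> r * L" unfolding \<alpha>_def using rL[symmetric] by (simp add: field_simps)
        then show ?thesis using fin by (simp add: S_def[symmetric] L_def[symmetric] r_def)
      qed
    qed
  qed
  ultimately show ?thesis by blast
qed

end
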